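(* Let $G$ be an optimal digraph with $\beta_G > \alpha_G$. For every augmenting sequence $v_1, f_1, v_2, f_2, \dots, f_k, v_{k+1}$ in $G$, we have $v_i \neq v_j$ for all $i \neq j$, except possibly $v_{k+1} = v_1$.
   Context: Digraphs are finite, loopless, with at most one edge $uv$ per ordered pair. A digraph is $2$-free if no distinct $u,v$ have both $uv,vu$ as edges. A circular interval digraph is a digraph together with a fixed arrangement of its vertices in a circle such that for all distinct $u,v,w$ in clockwise order with $uw\in E(G)$, also $uv,vw\in E(G)$. For distinct $u,v$, $d(u,v) = 1 + |\{w: u,w,v \text{ distinct, in clockwise order}\}|$; this is the length of the ordered pair $uv$. A non-edge is an ordered pair $(u,v)$ of distinct vertices with neither $uv$ nor $vu$ an edge; its length is $d(u,v)$. $\alpha_G$ is the minimum length of a non-edge ($\infty$ if none) and $\beta_G$ the maximum length of an edge ($0$ if none). A longest edge is an edge of length $\beta_G$; a shortest non-edge is a non-edge of length $\alpha_G$; an extreme pair is a longest edge or a shortest non-edge. An alternating sequence is a sequence $v_1,f_1,v_2,\dots,f_k,v_{k+1}$ ($k\ge1$) of vertices $v_i$ and extreme pairs $f_i=(v_i,v_{i+1})$ such that the $f_i$ are pairwise distinct, and for $1\le i\le k-1$, if $f_i$ is an edge then $f_{i+1}$ is a non-edge, and if $f_i$ is a non-edge then $f_{i+1}$ is an edge. An augmenting sequence is a maximal alternating sequence (one that cannot be extended at either end to a longer alternating sequence). $\xi(G)$ is the number of pairs $(uv,(w,x))$ with $uv\in E(G)$, $(w,x)$ a non-edge, $d(u,v)>d(w,x)$.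 $\tilde P_3(G)$ is the number of triples $(a,b,c)$ of distinct vertices with $ab,bc\in E(G)$ and $ac,ca\notin E(G)$. For fixed $n\ge 4$, $G$ is optimal if it is a $2$-free circular interval digraph on $n$ vertices maximizing $\tilde P_3$ among all such digraphs and, subject to this, minimizing $\xi(G)$. *)

theory Defs
  imports Main "HOL-Library.Extended_Nat"
begin

text \<open>Vertices of a digraph on n vertices are 0,...,n-1, arranged clockwise in
increasing order around the circle. A digraph is an edge predicate E.\<close>

definition is_digraph :: "nat \<Rightarrow> (nat \<Rightarrow> nat \<Rightarrow> bool) \<Rightarrow> bool" where
  "is_digraph n E \<longleftrightarrow> (\<forall>u v. E u v \<longrightarrow> u < n \<and> v < n \<and> u \<noteq> v)"

definition two_free :: "nat \<Rightarrow> (nat \<Rightarrow> nat \<Rightarrow> bool) \<Rightarrow> bool" where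
  "two_free n E \<longleftrightarrow> (\<forall>u<n. \<forall>v<n. u \<noteq> v \<longrightarrow> \<not> (E u v \<and> E v u))"

definition clockwise :: "nat \<Rightarrow> nat \<Rightarrow> nat \<Rightarrow> nat \<Rightarrow> bool" where
  "clockwise n u v w \<longleftrightarrow> u < n \<and> v < n \<and> w < n \<and> u \<noteq> v \<and> v \<noteq> w \<and> u \<noteq> w \<and>
     (v + n - u) mod n < (w + n - u) mod n"

definition circ_interval :: "nat \<Rightarrow> (nat \<Rightarrow> nat \<Rightarrow> bool) \<Rightarrow> bool" where
  "circ_interval n E \<longleftrightarrow> is_digraph n E \<and>
     (\<forall>u v w. clockwise n u v w \<and> E u w \<longrightarrow> E u v \<and> E v w)"

definition dlen :: "nat \<Rightarrow> nat \<Rightarrow> nat \<Rightarrow> nat" where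
  "dlen n u v = 1 + card {w. w < n \<and> clockwise n u w v}"

definition nonedge :: "nat \<Rightarrow> (nat \<Rightarrow> nat \<Rightarrow> bool) \<Rightarrow> nat \<Rightarrow> nat \<Rightarrow> bool" where
  "nonedge n E u v \<longleftrightarrow> u < n \<and> v < n \<and> u \<noteq> v \<and> \<not> E u v \<and> \<not> E v u"

definition alphaG :: "nat \<Rightarrow> (nat \<Rightarrow> nat \<Rightarrow> bool) \<Rightarrow> enat" where
  "alphaG n E = (if \<exists>u v. nonedge n E u v
      then enat (Min {dlen n u v | u v. nonedge n E u v}) else \<infinity>)"

definition betaG :: "nat \<Rightarrow> (nat \<Rightarrow> nat \<Rightarrow> bool) \<Rightarrow> nat" where
  "betaG n E = (if \<exists>u v. E u v then Max {dlen n u v | u v. E u v} else 0)"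

definition longest_edge :: "nat \<Rightarrow> (nat \<Rightarrow> nat \<Rightarrow> bool) \<Rightarrow> nat \<Rightarrow> nat \<Rightarrow> bool" where
  "longest_edge n E u v \<longleftrightarrow> E u v \<and> dlen n u v = betaG n E"

definition shortest_nonedge :: "nat \<Rightarrow> (nat \<Rightarrow> nat \<Rightarrow> bool) \<Rightarrow> nat \<Rightarrow> nat \<Rightarrow> bool" where
  "shortest_nonedge n E u v \<longleftrightarrow> nonedge n E u v \<and> enat (dlen n u v) = alphaG n E"

definition extreme :: "nat \<Rightarrow> (nat \<Rightarrow> nat \<Rightarrow> bool) \<Rightarrow> nat \<Rightarrow> nat \<Rightarrow> bool" where
  "extreme n E u v \<longleftrightarrow> longest_edge n E u v \<or> shortest_nonedge n E u v"

text \<open>An alternating sequence v_1,f_1,...,f_k,v_{k+1} is encoded by the vertex list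
vs = [v_1,...,v_{k+1}] (k = length vs - 1 \<ge> 1); f_i = (v_i, v_{i+1}).\<close>
definition alternating :: "nat \<Rightarrow> (nat \<Rightarrow> nat \<Rightarrow> bool) \<Rightarrow> nat list \<Rightarrow> bool" where
  "alternating n E vs \<longleftrightarrow> length vs \<ge> 2 \<and>
     (\<forall>i. i + 1 < length vs \<longrightarrow> extreme n E (vs ! i) (vs ! (i + 1))) \<and>
     distinct (map (\<lambda>i. (vs ! i, vs ! (i + 1))) [0..<length vs - 1]) \<and>
     (\<forall>i. i + 2 < length vs \<longrightarrow>
        (E (vs ! i) (vs ! (i + 1)) \<longrightarrow> nonedge n E (vs ! (i + 1)) (vs ! (i + 2))) \<and>
        (nonedge n E (vs ! i) (vs ! (i + 1)) \<longrightarrow> E (vs ! (i + 1)) (vs ! (i + 2))))"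

definition augmenting :: "nat \<Rightarrow> (nat \<Rightarrow> nat \<Rightarrow> bool) \<Rightarrow> nat list \<Rightarrow> bool" where
  "augmenting n E vs \<longleftrightarrow> alternating n E vs \<and>
     \<not> (\<exists>xs ys. xs @ ys \<noteq> [] \<and> alternating n E (xs @ vs @ ys))"

definition xi :: "nat \<Rightarrow> (nat \<Rightarrow> nat \<Rightarrow> bool) \<Rightarrow> nat" where
  "xi n E = card {((u, v), (w, x)). E u v \<and> nonedge n E w x \<and> dlen n u v > dlen n w x}"

definition P3t :: "nat \<Rightarrow> (nat \<Rightarrow> nat \<Rightarrow> bool) \<Rightarrow> nat" where
  "P3t n E = card {(a, b, c). a < n \<and> b < n \<and> c < n \<and> a \<noteq> b \<and> b \<noteq> c \<and> a \<noteq> c \<and>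
      E a b \<and> E b c \<and> \<not> E a c \<and> \<not> E c a}"

definition admissible :: "nat \<Rightarrow> (nat \<Rightarrow> nat \<Rightarrow> bool) \<Rightarrow> bool" where
  "admissible n E \<longleftrightarrow> circ_interval n E \<and> two_free n E"

definition optimal :: "nat \<Rightarrow> (nat \<Rightarrow> nat \<Rightarrow> bool) \<Rightarrow> bool" where
  "optimal n E \<longleftrightarrow> admissible n E \<and>
     (\<forall>E'. admissible n E' \<longrightarrow> P3t n E' \<le> P3t n E) \<and>
     (\<forall>E'. admissible n E' \<and> P3t n E' = P3t n E \<longrightarrow> xi n E \<le> xi n E')"

end

theory Submission
  imports Defs
begin

definition off :: "nat \<Rightarrow> nat \<Rightarrow> nat \<Rightarrow> nat" where
  "off n u v = (v + n - u) mod n"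

lemma mod_lt2: "(n::nat) > 0 \<Longrightarrow> a < 2*n \<Longrightarrow> a mod n = (if a < n then a else a - n)"
  by (simp add: le_mod_geq)

lemma off_alt: "u < n \<Longrightarrow> v < n \<Longrightarrow> off n u v = (if u \<le> v then v - u else v + n - u)"
  unfolding off_def by (subst mod_lt2) auto

lemma clockwise_off: "clockwise n u w v \<longleftrightarrow> u < n \<and> w < n \<and> v < n \<and> u \<noteq> w \<and> w \<noteq> v \<and> u \<noteq> v \<and> off n u w < off n u v"
  unfolding clockwise_def off_def by auto

lemma off_shift: "u < n \<Longrightarrow> k < n \<Longrightarrow> off n u ((u + k) mod n) = k"
proof -
  assume a: "u < n" "k < n"
  hence n0: "n > 0" by auto
  have m: "(u + k) mod n = (if u + k < n then u + k else u + k - n)"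
    using a by (intro mod_lt2[OF n0]) auto
  have "(u+k) mod n < n" using n0 by simp
  thus ?thesis using a by (simp only: off_alt m) (auto split: if_splits)
qed

lemma shift_off: "u < n \<Longrightarrow> w < n \<Longrightarrow> (u + off n u w) mod n = w"
proof -
  assume a: "u < n" "w < n"
  hence n0: "n > 0" by auto
  show ?thesis
  proof (cases "u \<le> w")
    case True thus ?thesis using a by (simp add: off_alt)
  next
    case False
    hence "u + off n u w = w + n" using a by (simp add: off_alt)
    thus ?thesis using a by simp
  qed
qed

lemma card_between:
  assumes "u < n" "v < n" "u \<noteq> v"
  shows "card {w. w < n \<and> clockwise n u w v} = off n u v - 1"
proof -
  have n0: "n > 0" using assms by auto
  let ?D = "off n u v"
  have D: "?D > 0" "?D < n" using assms by (auto simp: off_alt)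
  have "{w. w < n \<and> clockwise n u w v} = (\<lambda>k. (u + k) mod n) ` {1..<?D}"
  proof (rule set_eqI, rule iffI)
    fix w assume w: "w \<in> {w. w < n \<and> clockwise n u w v}"
    hence wc: "w < n" "w \<noteq> u" "off n u w < ?D" by (auto simp: clockwise_off)
    have "off n u w \<noteq> 0" using wc assms by (auto simp: off_alt)
    hence "off n u w \<in> {1..<?D}" using wc by auto
    moreover have "(u + off n u w) mod n = w" using wc assms shift_off by blast
    ultimately show "w \<in> (\<lambda>k. (u + k) mod n) ` {1..<?D}" by (metis image_eqI)
  next
    fix w assume "w \<in> (\<lambda>k. (u + k) mod n) ` {1..<?D}"
    then obtain k where k: "1 \<le> k" "k < ?D" "w = (u + k) mod n" by auto
    have wn: "w < n" using k n0 by auto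
    have ok: "off n u w = k" using k D assms off_shift by simp
    have "w \<noteq> u" using ok k assms by (auto simp: off_alt)
    moreover have "w \<noteq> v" using ok k by auto
    ultimately show "w \<in> {w. w < n \<and> clockwise n u w v}"
      using wn ok k assms by (auto simp: clockwise_off)
  qed
  moreover have "inj_on (\<lambda>k. (u + k) mod n) {1..<?D}"
  proof (rule inj_onI)
    fix x y assume "x \<in> {1..<?D}" "y \<in> {1..<?D}" "(u + x) mod n = (u + y) mod n"
    thus "x = y" using D assms off_shift by (metis atLeastLessThan_iff order.strict_trans)
  qed
  ultimately show ?thesis by (simp add: card_image)
qed

lemma dlen_off: "u < n \<Longrightarrow> v < n \<Longrightarrow> u \<noteq> v \<Longrightarrow> dlen n u v = off n u v"
  unfolding dlen_def using card_between[of u n v]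
  by (auto simp: off_alt)

lemma off_inj2: "u < n \<Longrightarrow> v < n \<Longrightarrow> w < n \<Longrightarrow> off n u v = off n u w \<Longrightarrow> v = w"
  by (auto simp: off_alt split: if_splits)

lemma off_inj1: "u < n \<Longrightarrow> v < n \<Longrightarrow> w < n \<Longrightarrow> off n u w = off n v w \<Longrightarrow> u = v"
  by (auto simp: off_alt split: if_splits)

lemma out_unique:
  assumes ci: "circ_interval n E" and ab: "alphaG n E < enat (betaG n E)"
    and e1: "extreme n E u v" and e2: "extreme n E u w"
  shows "v = w"
proof -
  have dg: "is_digraph n E" using ci by (simp add: circ_interval_def)
  have mixed: False if le: "longest_edge n E u v" and sn: "shortest_nonedge n E u w" for v w
  proof -
    have Euv: "E u v" "u < n" "v < n" "u \<noteq> v" using le dg unfolding longest_edge_def is_digraph_def by blast+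
    have nw: "nonedge n E u w" "w < n" "u \<noteq> w" using sn unfolding shortest_nonedge_def nonedge_def by blast+
    have "enat (dlen n u w) < enat (dlen n u v)" using le sn ab
      by (simp add: longest_edge_def shortest_nonedge_def)
    hence lt: "off n u w < off n u v" using Euv nw by (simp add: dlen_off)
    hence "w \<noteq> v" by auto
    hence "clockwise n u w v" using lt Euv nw by (simp add: clockwise_off)
    hence "E u w" using ci Euv unfolding circ_interval_def by blast
    thus False using nw by (simp add: nonedge_def)
  qed
  show ?thesis
  proof (cases "longest_edge n E u v")
    case True
    then have Euv: "u < n" "v < n" "u \<noteq> v" using dg unfolding longest_edge_def is_digraph_def by blast+
    show ?thesis
    proof (cases "longest_edge n E u w")
      case True2: True
      then have "u < n" "w < n" "u \<noteq> w" using dg unfolding longest_edge_def is_digraph_def by blast+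
      hence "off n u w = betaG n E" using True2 by (simp add: longest_edge_def dlen_off)
      moreover have "off n u v = betaG n E" using True Euv by (simp add: longest_edge_def dlen_off)
      ultimately show ?thesis using off_inj2[of u n v w] Euv \<open>w < n\<close> by simp
    next
      case False
      then show ?thesis using mixed[OF True] e2 by (auto simp: extreme_def)
    qed
  next
    case False
    then have sv: "shortest_nonedge n E u v" using e1 by (simp add: extreme_def)
    then have Euv: "u < n" "v < n" "u \<noteq> v" unfolding shortest_nonedge_def nonedge_def by blast+
    show ?thesis
    proof (cases "longest_edge n E u w")
      case True
      then show ?thesis using mixed[OF True sv] by simp
    next
      case False2: False
      then have sw: "shortest_nonedge n E u w" using e2 by (simp add: extreme_def)
      then have "u < n" "w < n" "u \<noteq> w" unfolding shortest_nonedge_def nonedge_def by blast+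
      hence "enat (off n u w) = alphaG n E" using sw by (simp add: shortest_nonedge_def dlen_off)
      moreover have "enat (off n u v) = alphaG n E" using sv Euv by (simp add: shortest_nonedge_def dlen_off)
      ultimately show ?thesis using off_inj2[of u n v w] Euv \<open>w < n\<close> by (metis enat.inject)
    qed
  qed
qed

lemma off_split: "u < n \<Longrightarrow> v < n \<Longrightarrow> w < n \<Longrightarrow> u \<noteq> v \<Longrightarrow> v \<noteq> w \<Longrightarrow> u \<noteq> w \<Longrightarrow>
   off n v w < off n u w \<Longrightarrow> off n u v < off n u w"
  by (auto simp: off_alt split: if_splits)

lemma in_unique:
  assumes ci: "circ_interval n E" and ab: "alphaG n E < enat (betaG n E)"
    and e1: "extreme n E u w" and e2: "extreme n E v w"
  shows "u = v"
proof -
  have dg: "is_digraph n E" using ci by (simp add: circ_interval_def)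
  have mixed: False if le: "longest_edge n E u w" and sn: "shortest_nonedge n E v w" for u v
  proof -
    have Euw: "E u w" "u < n" "w < n" "u \<noteq> w" using le dg unfolding longest_edge_def is_digraph_def by blast+
    have nw: "nonedge n E v w" "v < n" "v \<noteq> w" using sn unfolding shortest_nonedge_def nonedge_def by blast+
    have "enat (dlen n v w) < enat (dlen n u w)" using le sn ab
      by (simp add: longest_edge_def shortest_nonedge_def)
    hence lt: "off n v w < off n u w" using Euw nw by (simp add: dlen_off)
    hence uv: "u \<noteq> v" by auto
    have "off n u v < off n u w" using off_split[OF Euw(2) nw(2) Euw(3) uv nw(3) Euw(4) lt] .
    hence "clockwise n u v w" using uv Euw nw by (simp add: clockwise_off)
    hence "E v w" using ci Euw unfolding circ_interval_def by blast
    thus False using nw by (simp add: nonedge_def)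
  qed
  show ?thesis
  proof (cases "longest_edge n E u w")
    case True
    then have Euv: "u < n" "w < n" "u \<noteq> w" using dg unfolding longest_edge_def is_digraph_def by blast+
    show ?thesis
    proof (cases "longest_edge n E v w")
      case True2: True
      then have "v < n" "v \<noteq> w" using dg unfolding longest_edge_def is_digraph_def by blast+
      hence "off n v w = betaG n E" using True2 Euv by (simp add: longest_edge_def dlen_off)
      moreover have "off n u w = betaG n E" using True Euv by (simp add: longest_edge_def dlen_off)
      ultimately show ?thesis using off_inj1[of u n v w] Euv \<open>v < n\<close> by simp
    next
      case False
      then show ?thesis using mixed[OF True] e2 by (auto simp: extreme_def)
    qed
  next
    case False
    then have sv: "shortest_nonedge n E u w" using e1 by (simp add: extreme_def)
    then have Euv: "u < n" "w < n" "u \<noteq> w" unfolding shortest_nonedge_def nonedge_def by blast+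
    show ?thesis
    proof (cases "longest_edge n E v w")
      case True
      then show ?thesis using mixed[OF True sv] by simp
    next
      case False2: False
      then have sw: "shortest_nonedge n E v w" using e2 by (simp add: extreme_def)
      then have "v < n" "v \<noteq> w" unfolding shortest_nonedge_def nonedge_def by blast+
      hence "enat (off n v w) = alphaG n E" using sw Euv by (simp add: shortest_nonedge_def dlen_off)
      moreover have "enat (off n u w) = alphaG n E" using sv Euv by (simp add: shortest_nonedge_def dlen_off)
      ultimately show ?thesis using off_inj1[of u n v w] Euv \<open>v < n\<close> by (metis enat.inject)
    qed
  qed
qed

theorem mainTheorem13:
  fixes n :: nat and E :: "nat \<Rightarrow> nat \<Rightarrow> bool" and vs :: "nat list"
  assumes "4 \<le> n"
    and "optimal n E"
    and "alphaG n E < enat (betaG n E)"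
    and "augmenting n E vs"
  shows "\<forall>i j. i < j \<and> j < length vs \<and> \<not> (i = 0 \<and> j = length vs - 1) \<longrightarrow> vs ! i \<noteq> vs ! j"
proof (intro allI impI)
  fix i j assume ij: "i < j \<and> j < length vs \<and> \<not> (i = 0 \<and> j = length vs - 1)"
  have ci: "circ_interval n E" using assms(2) by (simp add: optimal_def admissible_def)
  have alt: "alternating n E vs" using assms(4) by (simp add: augmenting_def)
  have ext: "\<And>i. i + 1 < length vs \<Longrightarrow> extreme n E (vs ! i) (vs ! (i + 1))"
    using alt by (simp add: alternating_def)
  let ?f = "\<lambda>i. (vs ! i, vs ! (i + 1))"
  have dst: "distinct (map ?f [0..<length vs - 1])" using alt by (simp add: alternating_def)
  have pd: "?f a \<noteq> ?f b" if "a < length vs - 1" "b < length vs - 1" "a \<noteq> b" for a b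
    using dst that by (simp add: distinct_conv_nth)
  show "vs ! i \<noteq> vs ! j"
  proof
    assume eq: "vs ! i = vs ! j"
    show False
    proof (cases "j + 1 < length vs")
      case True
      have ei: "extreme n E (vs ! i) (vs ! (i + 1))" using ext[of i] True ij by simp
      have ej: "extreme n E (vs ! i) (vs ! (j + 1))" using ext[of j] True eq by simp
      have "vs ! (i+1) = vs ! (j+1)" using out_unique[OF ci assms(3) ei ej] .
      moreover have "i < length vs - 1" "j < length vs - 1" "i \<noteq> j" using True ij by auto
      ultimately show False using pd[of i j] eq by simp
    next
      case False
      then have j: "j = length vs - 1" using ij by auto
      then have i0: "i > 0" using ij by auto
      have e1: "extreme n E (vs ! (i - 1)) (vs ! i)" using ext[of "i - 1"] i0 ij by simp
      have e2: "extreme n E (vs ! (j - 1)) (vs ! j)" using ext[of "j - 1"] i0 ij by simp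
      have "vs ! (i - 1) = vs ! (j - 1)" using in_unique[OF ci assms(3) e1] e2 eq by simp
      moreover have "vs ! (i - 1 + 1) = vs ! (j - 1 + 1)" using i0 ij eq by simp
      moreover have "i - 1 < length vs - 1" "j - 1 < length vs - 1" "i - 1 \<noteq> j - 1" using i0 ij j by auto
      ultimately show False using pd[of "i - 1" "j - 1"] by simp
    qed
  qed
qed

end
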